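(* Let $f$ and $g$ be ternary cubic forms such that $J^3[f,g,u_x^3]=0$ identically in $u$. (1) If $f_{333}\neq0$, then $g=0$ if and only if $g_{113}=g_{123}=g_{223}=g_{133}=g_{233}=g_{333}=0$. (2) If $f_{333}\neq0$ and $4f_{113}f_{223}-f_{123}^2\neq0$, then $g=0$ if and only if $g_{113}=g_{123}=g_{223}=g_{333}=0$.
   Context: A ternary cubic form is written $f=\sum_{1\le i\le j\le k\le3}f_{ijk}x_ix_jx_k$, so $f_{ijk}$ ($i\le j\le k$) is the coefficient of the monomial $x_ix_jx_k$; the same convention applies to $g_{ijk}$. The variables $u=(u_1,u_2,u_3)$ are indeterminates and $u_x=\sum u_ix_i$. The third transvectant is $J^3[f,g,h]=\big(\Omega^3(f(x)g(y)h(z))\big)|_{y=z=x}$, where $\Omega$ is the determinant of the operator matrix with rows $(\partial/\partial x_i)$, $(\partial/\partial y_i)$, $(\partial/\partial z_i)$, and $u$ is treated as constant. *)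

theory Defs
  imports "HOL-Combinatorics.Permutations"
begin

text \<open>A ternary cubic form f = sum over 1 <= i <= j <= k <= 3 of f_ijk x_i x_j x_k is
  represented by its coefficient function c, where c i j k (for 1 <= i <= j <= k <= 3)
  is the coefficient of the monomial x_i x_j x_k; other values are irrelevant.\<close>

type_synonym 'a cubic = "nat \<Rightarrow> nat \<Rightarrow> nat \<Rightarrow> 'a"

definition cubic_zero :: "'a::zero cubic \<Rightarrow> bool" where
  "cubic_zero c \<longleftrightarrow> (\<forall>i j k. 1 \<le> i \<and> i \<le> j \<and> j \<le> k \<and> k \<le> 3 \<longrightarrow> c i j k = 0)"

definition mult_fact :: "nat \<Rightarrow> nat \<Rightarrow> nat \<Rightarrow> nat" where
  "mult_fact a b c = (\<Prod>m\<in>{1..3}. fact (count_list [a,b,c] m))"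

definition coef :: "'a cubic \<Rightarrow> nat \<Rightarrow> nat \<Rightarrow> nat \<Rightarrow> 'a" where
  "coef c a b d = (let s = sort [a,b,d] in c (s!0) (s!1) (s!2))"

text \<open>Third partial derivative d^3 f / dx_a dx_b dx_c of a cubic form (a constant):
  the derivative of x_i x_j x_k is the product of the factorials of the multiplicities
  when the multisets {i,j,k} and {a,b,c} agree, and 0 otherwise.\<close>
definition D3 :: "'a::semiring_1 cubic \<Rightarrow> nat \<Rightarrow> nat \<Rightarrow> nat \<Rightarrow> 'a" where
  "D3 f a b c = of_nat (mult_fact a b c) * coef f a b c"

text \<open>The cubic form u_x^3 = (u_1 x_1 + u_2 x_2 + u_3 x_3)^3 (multinomial coefficients).\<close>
definition ux3 :: "(nat \<Rightarrow> 'a::semiring_1) \<Rightarrow> 'a cubic" where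
  "ux3 u i j k = of_nat (6 div mult_fact i j k) * u i * u j * u k"

text \<open>Third transvectant J^3[f,g,h] = Omega^3 (f(x) g(y) h(z)) at y = z = x, where
  Omega = sum over permutations s of {1,2,3} of sign s * d/dx_(s 1) d/dy_(s 2) d/dz_(s 3).
  For cubic forms all third derivatives are constants, giving the formula below.\<close>
definition J3 :: "'a::comm_ring_1 cubic \<Rightarrow> 'a cubic \<Rightarrow> 'a cubic \<Rightarrow> 'a" where
  "J3 f g h = (\<Sum>s\<in>{p. p permutes {1,2,3::nat}}. \<Sum>t\<in>{p. p permutes {1,2,3::nat}}.
      \<Sum>r\<in>{p. p permutes {1,2,3::nat}}.
        of_int (sign s * sign t * sign r)
        * D3 f (s 1) (t 1) (r 1) * D3 g (s 2) (t 2) (r 2) * D3 h (s 3) (t 3) (r 3))"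

end

theory Submission
  imports Defs
begin

lemma perm3_sum:
  fixes F :: "(nat \<Rightarrow> nat) \<Rightarrow> 'b::comm_monoid_add"
  shows "sum F {p. p permutes {1,2,3::nat}} =
    F (transpose 1 1 \<circ> (transpose 2 2 \<circ> (transpose 3 3 \<circ> id))) + F (transpose 1 1 \<circ> (transpose 2 3 \<circ> (transpose 3 3 \<circ> id)))
  + F (transpose 1 2 \<circ> (transpose 2 2 \<circ> (transpose 3 3 \<circ> id))) + F (transpose 1 2 \<circ> (transpose 2 3 \<circ> (transpose 3 3 \<circ> id)))
  + F (transpose 1 3 \<circ> (transpose 2 2 \<circ> (transpose 3 3 \<circ> id))) + F (transpose 1 3 \<circ> (transpose 2 3 \<circ> (transpose 3 3 \<circ> id)))"
proof -
  have e: "{p. p permutes ({}::nat set)} = {id}" by auto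
  show ?thesis
    apply (subst sum_over_permutations_insert, simp, simp)
    apply (subst sum_over_permutations_insert, simp, simp)
    apply (subst sum_over_permutations_insert, simp, simp)
    apply (simp add: e add_ac)
    done
qed
definition q1 :: "nat \<Rightarrow> nat" where "q1 = transpose 1 1 \<circ> (transpose 2 2 \<circ> (transpose 3 3 \<circ> id))"
definition q2 :: "nat \<Rightarrow> nat" where "q2 = transpose 1 1 \<circ> (transpose 2 3 \<circ> (transpose 3 3 \<circ> id))"
definition q3 :: "nat \<Rightarrow> nat" where "q3 = transpose 1 2 \<circ> (transpose 2 2 \<circ> (transpose 3 3 \<circ> id))"
definition q4 :: "nat \<Rightarrow> nat" where "q4 = transpose 1 2 \<circ> (transpose 2 3 \<circ> (transpose 3 3 \<circ> id))"
definition q5 :: "nat \<Rightarrow> nat" where "q5 = transpose 1 3 \<circ> (transpose 2 2 \<circ> (transpose 3 3 \<circ> id))"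
definition q6 :: "nat \<Rightarrow> nat" where "q6 = transpose 1 3 \<circ> (transpose 2 3 \<circ> (transpose 3 3 \<circ> id))"
lemma qvals:
  shows "q1 1 = 1"
    "q1 2 = 2"
    "q1 3 = 3"
    "q2 1 = 1"
    "q2 2 = 3"
    "q2 3 = 2"
    "q3 1 = 2"
    "q3 2 = 1"
    "q3 3 = 3"
    "q4 1 = 2"
    "q4 2 = 3"
    "q4 3 = 1"
    "q5 1 = 3"
    "q5 2 = 2"
    "q5 3 = 1"
    "q6 1 = 3"
    "q6 2 = 1"
    "q6 3 = 2"
  by (simp_all add: q1_def q2_def q3_def q4_def q5_def q6_def transpose_def)
lemma qsigns:
  shows "sign q1 = 1"
    "sign q2 = -1"
    "sign q3 = -1"
    "sign q4 = 1"
    "sign q5 = -1"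
    "sign q6 = 1"
  by (simp_all add: q1_def q2_def q3_def q4_def q5_def q6_def sign_compose permutation_compose permutation_swap_id sign_swap_id)
lemma perm3_sum_q: "sum F {p. p permutes {1,2,3::nat}} = F q1 + F q2 + F q3 + F q4 + F q5 + F q6"
  unfolding perm3_sum q1_def q2_def q3_def q4_def q5_def q6_def by simp

lemma mf: "mult_fact a b c = fact (count_list [a,b,c] 1) * fact (count_list [a,b,c] 2) * fact (count_list [a,b,c] 3)"
proof -
  have "{1..3::nat} = {1,2,3}" by auto
  then show ?thesis by (simp add: mult_fact_def)
qed
lemma six: "(of_nat ((6::nat) div Suc (Suc 0)) :: 'a::comm_ring_1) = 3"
  by (simp add: numeral_2_eq_2[symmetric])
lemma D3vals:
  fixes f :: "'a::comm_ring_1 cubic"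
  shows "D3 f 1 1 1 = 6 * f 1 1 1"
    "D3 f 1 1 2 = 2 * f 1 1 2"
    "D3 f 1 1 3 = 2 * f 1 1 3"
    "D3 f 1 2 1 = 2 * f 1 1 2"
    "D3 f 1 2 2 = 2 * f 1 2 2"
    "D3 f 1 2 3 = f 1 2 3"
    "D3 f 1 3 1 = 2 * f 1 1 3"
    "D3 f 1 3 2 = f 1 2 3"
    "D3 f 1 3 3 = 2 * f 1 3 3"
    "D3 f 2 1 1 = 2 * f 1 1 2"
    "D3 f 2 1 2 = 2 * f 1 2 2"
    "D3 f 2 1 3 = f 1 2 3"
    "D3 f 2 2 1 = 2 * f 1 2 2"
    "D3 f 2 2 2 = 6 * f 2 2 2"
    "D3 f 2 2 3 = 2 * f 2 2 3"
    "D3 f 2 3 1 = f 1 2 3"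
    "D3 f 2 3 2 = 2 * f 2 2 3"
    "D3 f 2 3 3 = 2 * f 2 3 3"
    "D3 f 3 1 1 = 2 * f 1 1 3"
    "D3 f 3 1 2 = f 1 2 3"
    "D3 f 3 1 3 = 2 * f 1 3 3"
    "D3 f 3 2 1 = f 1 2 3"
    "D3 f 3 2 2 = 2 * f 2 2 3"
    "D3 f 3 2 3 = 2 * f 2 3 3"
    "D3 f 3 3 1 = 2 * f 1 3 3"
    "D3 f 3 3 2 = 2 * f 2 3 3"
    "D3 f 3 3 3 = 6 * f 3 3 3"
  by (simp_all add: D3_def mf coef_def)
lemma D3u:
  fixes u :: "nat \<Rightarrow> 'a::comm_ring_1"
  shows "D3 (ux3 u) 1 1 1 = 6 * u 1 * u 1 * u 1"
    "D3 (ux3 u) 1 1 2 = 6 * u 1 * u 1 * u 2"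
    "D3 (ux3 u) 1 1 3 = 6 * u 1 * u 1 * u 3"
    "D3 (ux3 u) 1 2 1 = 6 * u 1 * u 2 * u 1"
    "D3 (ux3 u) 1 2 2 = 6 * u 1 * u 2 * u 2"
    "D3 (ux3 u) 1 2 3 = 6 * u 1 * u 2 * u 3"
    "D3 (ux3 u) 1 3 1 = 6 * u 1 * u 3 * u 1"
    "D3 (ux3 u) 1 3 2 = 6 * u 1 * u 3 * u 2"
    "D3 (ux3 u) 1 3 3 = 6 * u 1 * u 3 * u 3"
    "D3 (ux3 u) 2 1 1 = 6 * u 2 * u 1 * u 1"
    "D3 (ux3 u) 2 1 2 = 6 * u 2 * u 1 * u 2"
    "D3 (ux3 u) 2 1 3 = 6 * u 2 * u 1 * u 3"
    "D3 (ux3 u) 2 2 1 = 6 * u 2 * u 2 * u 1"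
    "D3 (ux3 u) 2 2 2 = 6 * u 2 * u 2 * u 2"
    "D3 (ux3 u) 2 2 3 = 6 * u 2 * u 2 * u 3"
    "D3 (ux3 u) 2 3 1 = 6 * u 2 * u 3 * u 1"
    "D3 (ux3 u) 2 3 2 = 6 * u 2 * u 3 * u 2"
    "D3 (ux3 u) 2 3 3 = 6 * u 2 * u 3 * u 3"
    "D3 (ux3 u) 3 1 1 = 6 * u 3 * u 1 * u 1"
    "D3 (ux3 u) 3 1 2 = 6 * u 3 * u 1 * u 2"
    "D3 (ux3 u) 3 1 3 = 6 * u 3 * u 1 * u 3"
    "D3 (ux3 u) 3 2 1 = 6 * u 3 * u 2 * u 1"
    "D3 (ux3 u) 3 2 2 = 6 * u 3 * u 2 * u 2"
    "D3 (ux3 u) 3 2 3 = 6 * u 3 * u 2 * u 3"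
    "D3 (ux3 u) 3 3 1 = 6 * u 3 * u 3 * u 1"
    "D3 (ux3 u) 3 3 2 = 6 * u 3 * u 3 * u 2"
    "D3 (ux3 u) 3 3 3 = 6 * u 3 * u 3 * u 3"
  by (simp_all add: D3_def mf coef_def ux3_def six)

definition uv :: "'a \<Rightarrow> 'a \<Rightarrow> 'a \<Rightarrow> nat \<Rightarrow> 'a" where "uv a b c = (\<lambda>i. if i = 1 then a else if i = 2 then b else c)"

lemma spec1:
  fixes f g :: "'a::comm_ring_1 cubic"
  shows "J3 f g (ux3 (uv 1 0 0)) = 72 * ((3 * f 2 2 2 * g 3 3 3 - 1 * f 2 2 3 * g 2 3 3 + 1 * f 2 3 3 * g 2 2 3 - 3 * f 3 3 3 * g 2 2 2))"
  unfolding J3_def perm3_sum_q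
  apply (simp only: qvals qsigns D3u)
  apply (simp only: D3vals)
  apply (simp add: uv_def)
  done

lemma spec2:
  fixes f g :: "'a::comm_ring_1 cubic"
  shows "J3 f g (ux3 (uv 0 1 0)) = 72 * ((- 3 * f 1 1 1 * g 3 3 3 + 1 * f 1 1 3 * g 1 3 3 - 1 * f 1 3 3 * g 1 1 3 + 3 * f 3 3 3 * g 1 1 1))"
  unfolding J3_def perm3_sum_q
  apply (simp only: qvals qsigns D3u)
  apply (simp only: D3vals)
  apply (simp add: uv_def)
  done

lemma spec3:
  fixes f g :: "'a::comm_ring_1 cubic"
  shows "J3 f g (ux3 (uv 1 1 0)) = 72 * ((3 * f 2 2 2 * g 3 3 3 - 1 * f 2 2 3 * g 2 3 3 + 1 * f 2 3 3 * g 2 2 3 - 3 * f 3 3 3 * g 2 2 2) + (- 3 * f 1 2 2 * g 3 3 3 + 1 * f 1 2 3 * g 2 3 3 - 1 * f 1 3 3 * g 2 2 3 + 1 * f 2 2 3 * g 1 3 3 - 1 * f 2 3 3 * g 1 2 3 + 3 * f 3 3 3 * g 1 2 2) + (3 * f 1 1 2 * g 3 3 3 - 1 * f 1 1 3 * g 2 3 3 - 1 * f 1 2 3 * g 1 3 3 + 1 * f 1 3 3 * g 1 2 3 + 1 * f 2 3 3 * g 1 1 3 - 3 * f 3 3 3 * g 1 1 2) + (- 3 * f 1 1 1 * g 3 3 3 + 1 * f 1 1 3 * g 1 3 3 - 1 * f 1 3 3 * g 1 1 3 + 3 * f 3 3 3 * g 1 1 1))"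
  unfolding J3_def perm3_sum_q
  apply (simp only: qvals qsigns D3u)
  apply (simp only: D3vals)
  apply (simp add: uv_def)
  done

lemma spec4:
  fixes f g :: "'a::comm_ring_1 cubic"
  shows "J3 f g (ux3 (uv (-1) 1 0)) = 72 * ((-1) * (3 * f 2 2 2 * g 3 3 3 - 1 * f 2 2 3 * g 2 3 3 + 1 * f 2 3 3 * g 2 2 3 - 3 * f 3 3 3 * g 2 2 2) + (- 3 * f 1 2 2 * g 3 3 3 + 1 * f 1 2 3 * g 2 3 3 - 1 * f 1 3 3 * g 2 2 3 + 1 * f 2 2 3 * g 1 3 3 - 1 * f 2 3 3 * g 1 2 3 + 3 * f 3 3 3 * g 1 2 2) + (-1) * (3 * f 1 1 2 * g 3 3 3 - 1 * f 1 1 3 * g 2 3 3 - 1 * f 1 2 3 * g 1 3 3 + 1 * f 1 3 3 * g 1 2 3 + 1 * f 2 3 3 * g 1 1 3 - 3 * f 3 3 3 * g 1 1 2) + (- 3 * f 1 1 1 * g 3 3 3 + 1 * f 1 1 3 * g 1 3 3 - 1 * f 1 3 3 * g 1 1 3 + 3 * f 3 3 3 * g 1 1 1))"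
  unfolding J3_def perm3_sum_q
  apply (simp only: qvals qsigns D3u)
  apply (simp only: D3vals)
  apply (simp add: uv_def)
  done

lemma spec5:
  fixes f g :: "'a::comm_ring_1 cubic"
  shows "J3 f g (ux3 (uv 1 0 1)) = 72 * ((3 * f 2 2 2 * g 3 3 3 - 1 * f 2 2 3 * g 2 3 3 + 1 * f 2 3 3 * g 2 2 3 - 3 * f 3 3 3 * g 2 2 2) + (1 * f 1 2 2 * g 2 3 3 - 1 * f 1 2 3 * g 2 2 3 + 3 * f 1 3 3 * g 2 2 2 - 3 * f 2 2 2 * g 1 3 3 + 1 * f 2 2 3 * g 1 2 3 - 1 * f 2 3 3 * g 1 2 2) + (1 * f 1 1 2 * g 2 2 3 - 3 * f 1 1 3 * g 2 2 2 - 1 * f 1 2 2 * g 1 2 3 + 1 * f 1 2 3 * g 1 2 2 + 3 * f 2 2 2 * g 1 1 3 - 1 * f 2 2 3 * g 1 1 2) + (3 * f 1 1 1 * g 2 2 2 - 1 * f 1 1 2 * g 1 2 2 + 1 * f 1 2 2 * g 1 1 2 - 3 * f 2 2 2 * g 1 1 1))"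
  unfolding J3_def perm3_sum_q
  apply (simp only: qvals qsigns D3u)
  apply (simp only: D3vals)
  apply (simp add: uv_def)
  done

lemma spec6:
  fixes f g :: "'a::comm_ring_1 cubic"
  shows "J3 f g (ux3 (uv (-1) 0 1)) = 72 * ((-1) * (3 * f 2 2 2 * g 3 3 3 - 1 * f 2 2 3 * g 2 3 3 + 1 * f 2 3 3 * g 2 2 3 - 3 * f 3 3 3 * g 2 2 2) + (1 * f 1 2 2 * g 2 3 3 - 1 * f 1 2 3 * g 2 2 3 + 3 * f 1 3 3 * g 2 2 2 - 3 * f 2 2 2 * g 1 3 3 + 1 * f 2 2 3 * g 1 2 3 - 1 * f 2 3 3 * g 1 2 2) + (-1) * (1 * f 1 1 2 * g 2 2 3 - 3 * f 1 1 3 * g 2 2 2 - 1 * f 1 2 2 * g 1 2 3 + 1 * f 1 2 3 * g 1 2 2 + 3 * f 2 2 2 * g 1 1 3 - 1 * f 2 2 3 * g 1 1 2) + (3 * f 1 1 1 * g 2 2 2 - 1 * f 1 1 2 * g 1 2 2 + 1 * f 1 2 2 * g 1 1 2 - 3 * f 2 2 2 * g 1 1 1))"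
  unfolding J3_def perm3_sum_q
  apply (simp only: qvals qsigns D3u)
  apply (simp only: D3vals)
  apply (simp add: uv_def)
  done

lemma spec7:
  fixes f g :: "'a::comm_ring_1 cubic"
  shows "J3 f g (ux3 (uv 0 1 1)) = 72 * ((- 3 * f 1 1 1 * g 3 3 3 + 1 * f 1 1 3 * g 1 3 3 - 1 * f 1 3 3 * g 1 1 3 + 3 * f 3 3 3 * g 1 1 1) + (3 * f 1 1 1 * g 2 3 3 - 1 * f 1 1 3 * g 1 2 3 + 1 * f 1 3 3 * g 1 1 2 - 1 * f 1 1 2 * g 1 3 3 + 1 * f 1 2 3 * g 1 1 3 - 3 * f 2 3 3 * g 1 1 1) + (- 3 * f 1 1 1 * g 2 2 3 + 1 * f 1 1 3 * g 1 2 2 + 1 * f 1 1 2 * g 1 2 3 - 1 * f 1 2 3 * g 1 1 2 - 1 * f 1 2 2 * g 1 1 3 + 3 * f 2 2 3 * g 1 1 1) + (3 * f 1 1 1 * g 2 2 2 - 1 * f 1 1 2 * g 1 2 2 + 1 * f 1 2 2 * g 1 1 2 - 3 * f 2 2 2 * g 1 1 1))"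
  unfolding J3_def perm3_sum_q
  apply (simp only: qvals qsigns D3u)
  apply (simp only: D3vals)
  apply (simp add: uv_def)
  done

lemma spec8:
  fixes f g :: "'a::comm_ring_1 cubic"
  shows "J3 f g (ux3 (uv 0 (-1) 1)) = 72 * ((-1) * (- 3 * f 1 1 1 * g 3 3 3 + 1 * f 1 1 3 * g 1 3 3 - 1 * f 1 3 3 * g 1 1 3 + 3 * f 3 3 3 * g 1 1 1) + (3 * f 1 1 1 * g 2 3 3 - 1 * f 1 1 3 * g 1 2 3 + 1 * f 1 3 3 * g 1 1 2 - 1 * f 1 1 2 * g 1 3 3 + 1 * f 1 2 3 * g 1 1 3 - 3 * f 2 3 3 * g 1 1 1) + (-1) * (- 3 * f 1 1 1 * g 2 2 3 + 1 * f 1 1 3 * g 1 2 2 + 1 * f 1 1 2 * g 1 2 3 - 1 * f 1 2 3 * g 1 1 2 - 1 * f 1 2 2 * g 1 1 3 + 3 * f 2 2 3 * g 1 1 1) + (3 * f 1 1 1 * g 2 2 2 - 1 * f 1 1 2 * g 1 2 2 + 1 * f 1 2 2 * g 1 1 2 - 3 * f 2 2 2 * g 1 1 1))"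
  unfolding J3_def perm3_sum_q
  apply (simp only: qvals qsigns D3u)
  apply (simp only: D3vals)
  apply (simp add: uv_def)
  done


lemma z72: "(72::'a::field_char_0) * x = 0 \<longleftrightarrow> x = 0" by simp
lemma pair1: "72*(a+b+c+d) = (0::'a::field_char_0) \<Longrightarrow> 72*((-1)*a + b + (-1)*c + d) = 0 \<Longrightarrow> 72*d = 0 \<Longrightarrow> b = 0"
proof -
  assume h: "72*(a+b+c+d) = (0::'a)" "72*((-1)*a + b + (-1)*c + d) = 0" "72*d = 0"
  then have h': "a+b+c+d = 0" "(-1)*a + b + (-1)*c + d = 0" "d = 0" by (simp_all only: z72)
  have "2*b = (a+b+c+d) + ((-1)*a + b + (-1)*c + d) - 2*d" by algebra
  also have "\<dots> = 0" by (simp only: h'(1) h'(2)) (simp add: h'(3))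
  finally have "2*b = 0" .
  then show "b = 0" by simp
qed
lemma pair2: "72*(a+b+c+d) = (0::'a::field_char_0) \<Longrightarrow> 72*((-1)*a + b + (-1)*c + d) = 0 \<Longrightarrow> 72*a = 0 \<Longrightarrow> c = 0"
proof -
  assume h: "72*(a+b+c+d) = (0::'a)" "72*((-1)*a + b + (-1)*c + d) = 0" "72*a = 0"
  then have h': "a+b+c+d = 0" "(-1)*a + b + (-1)*c + d = 0" "a = 0" by (simp_all only: z72)
  have "2*c = (a+b+c+d) - ((-1)*a + b + (-1)*c + d) - 2*a" by algebra
  also have "\<dots> = 0" by (simp only: h'(1) h'(2)) (simp add: h'(3))
  finally have "2*c = 0" .
  then show "c = 0" by simp
qed

lemma cz: "cubic_zero g \<longleftrightarrow> g 1 1 1 = 0 \<and> g 1 1 2 = 0 \<and> g 1 1 3 = 0 \<and> g 1 2 2 = 0 \<and> g 1 2 3 = 0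
   \<and> g 1 3 3 = 0 \<and> g 2 2 2 = 0 \<and> g 2 2 3 = 0 \<and> g 2 3 3 = 0 \<and> g 3 3 3 = 0"
proof
  assume "cubic_zero g" then show "g 1 1 1 = 0 \<and> g 1 1 2 = 0 \<and> g 1 1 3 = 0 \<and> g 1 2 2 = 0 \<and> g 1 2 3 = 0
   \<and> g 1 3 3 = 0 \<and> g 2 2 2 = 0 \<and> g 2 2 3 = 0 \<and> g 2 3 3 = 0 \<and> g 3 3 3 = 0"
    unfolding cubic_zero_def by simp
next
  assume H: "g 1 1 1 = 0 \<and> g 1 1 2 = 0 \<and> g 1 1 3 = 0 \<and> g 1 2 2 = 0 \<and> g 1 2 3 = 0
   \<and> g 1 3 3 = 0 \<and> g 2 2 2 = 0 \<and> g 2 2 3 = 0 \<and> g 2 3 3 = 0 \<and> g 3 3 3 = 0"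
  show "cubic_zero g" unfolding cubic_zero_def
  proof (intro allI impI)
    fix i j k :: nat assume b: "1 \<le> i \<and> i \<le> j \<and> j \<le> k \<and> k \<le> 3"
    then have "i = 1 \<or> i = 2 \<or> i = 3" "j = 1 \<or> j = 2 \<or> j = 3" "k = 1 \<or> k = 2 \<or> k = 3" by auto
    then show "g i j k = 0" using b H by auto
  qed
qed

theorem lemma7p5:
  fixes f g :: "'a::field_char_0 cubic"
  assumes J: "\<forall>u :: nat \<Rightarrow> 'a. J3 f g (ux3 u) = 0"
  shows "(f 3 3 3 \<noteq> 0 \<longrightarrow>
           (cubic_zero g \<longleftrightarrow>
              g 1 1 3 = 0 \<and> g 1 2 3 = 0 \<and> g 2 2 3 = 0 \<and> g 1 3 3 = 0 \<and> g 2 3 3 = 0 \<and> g 3 3 3 = 0))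
       \<and> (f 3 3 3 \<noteq> 0 \<and> 4 * f 1 1 3 * f 2 2 3 - (f 1 2 3)^2 \<noteq> 0 \<longrightarrow>
           (cubic_zero g \<longleftrightarrow> g 1 1 3 = 0 \<and> g 1 2 3 = 0 \<and> g 2 2 3 = 0 \<and> g 3 3 3 = 0))"
proof -
  have s: "\<And>u. J3 f g (ux3 u) = 0" using J by blast
  note e1 = spec1[of f g, unfolded s, symmetric]
  note e2 = spec2[of f g, unfolded s, symmetric]
  note e3 = spec3[of f g, unfolded s, symmetric]
  note e4 = spec4[of f g, unfolded s, symmetric]
  note e5 = spec5[of f g, unfolded s, symmetric]
  note e6 = spec6[of f g, unfolded s, symmetric]
  note e7 = spec7[of f g, unfolded s, symmetric]
  note e8 = spec8[of f g, unfolded s, symmetric]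
  have E111: "(3 * f 2 2 2 * g 3 3 3 - 1 * f 2 2 3 * g 2 3 3 + 1 * f 2 3 3 * g 2 2 3 - 3 * f 3 3 3 * g 2 2 2) = 0" using e1 by (simp only: z72)
  have E222: "(- 3 * f 1 1 1 * g 3 3 3 + 1 * f 1 1 3 * g 1 3 3 - 1 * f 1 3 3 * g 1 1 3 + 3 * f 3 3 3 * g 1 1 1) = 0" using e2 by (simp only: z72)
  have E112: "(- 3 * f 1 2 2 * g 3 3 3 + 1 * f 1 2 3 * g 2 3 3 - 1 * f 1 3 3 * g 2 2 3 + 1 * f 2 2 3 * g 1 3 3 - 1 * f 2 3 3 * g 1 2 3 + 3 * f 3 3 3 * g 1 2 2) = 0" by (rule pair1[OF e3 e4 e2])
  have E122: "(3 * f 1 1 2 * g 3 3 3 - 1 * f 1 1 3 * g 2 3 3 - 1 * f 1 2 3 * g 1 3 3 + 1 * f 1 3 3 * g 1 2 3 + 1 * f 2 3 3 * g 1 1 3 - 3 * f 3 3 3 * g 1 1 2) = 0" by (rule pair2[OF e3 e4 e1])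
  have E133: "(1 * f 1 1 2 * g 2 2 3 - 3 * f 1 1 3 * g 2 2 2 - 1 * f 1 2 2 * g 1 2 3 + 1 * f 1 2 3 * g 1 2 2 + 3 * f 2 2 2 * g 1 1 3 - 1 * f 2 2 3 * g 1 1 2) = 0" by (rule pair2[OF e5 e6 e1])
  have E233: "(- 3 * f 1 1 1 * g 2 2 3 + 1 * f 1 1 3 * g 1 2 2 + 1 * f 1 1 2 * g 1 2 3 - 1 * f 1 2 3 * g 1 1 2 - 1 * f 1 2 2 * g 1 1 3 + 3 * f 2 2 3 * g 1 1 1) = 0" by (rule pair2[OF e7 e8 e2])
  have P1: "cubic_zero g" if d: "f 3 3 3 \<noteq> 0" and z: "g 1 1 3 = 0" "g 1 2 3 = 0" "g 2 2 3 = 0" "g 1 3 3 = 0" "g 2 3 3 = 0" "g 3 3 3 = 0"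
  proof -
    have "g 2 2 2 = 0" using E111 d z by simp
    moreover have "g 1 2 2 = 0" using E112 d z by simp
    moreover have "g 1 1 2 = 0" using E122 d z by simp
    moreover have "g 1 1 1 = 0" using E222 d z by simp
    ultimately show ?thesis using z unfolding cz by simp
  qed
  have P2: "cubic_zero g" if d: "f 3 3 3 \<noteq> 0" and q: "4 * f 1 1 3 * f 2 2 3 - (f 1 2 3)^2 \<noteq> 0"
    and z: "g 1 1 3 = 0" "g 1 2 3 = 0" "g 2 2 3 = 0" "g 3 3 3 = 0"
  proof -
    have "(4 * f 1 1 3 * f 2 2 3 - (f 1 2 3)^2) * g 2 3 3 = 3 * f 3 3 3 * (1 * f 1 1 2 * g 2 2 3 - 3 * f 1 1 3 * g 2 2 2 - 1 * f 1 2 2 * g 1 2 3 + 1 * f 1 2 3 * g 1 2 2 + 3 * f 2 2 2 * g 1 1 3 - 1 * f 2 2 3 * g 1 1 2) - 3 * f 1 1 3 * (3 * f 2 2 2 * g 3 3 3 - 1 * f 2 2 3 * g 2 3 3 + 1 * f 2 3 3 * g 2 2 3 - 3 * f 3 3 3 * g 2 2 2) - f 1 2 3 * (- 3 * f 1 2 2 * g 3 3 3 + 1 * f 1 2 3 * g 2 3 3 - 1 * f 1 3 3 * g 2 2 3 + 1 * f 2 2 3 * g 1 3 3 - 1 * f 2 3 3 * g 1 2 3 + 3 * f 3 3 3 * g 1 2 2) - f 2 2 3 * (3 * f 1 1 2 * g 3 3 3 - 1 * f 1 1 3 * g 2 3 3 - 1 * f 1 2 3 * g 1 3 3 + 1 *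 f 1 3 3 * g 1 2 3 + 1 * f 2 3 3 * g 1 1 3 - 3 * f 3 3 3 * g 1 1 2)"
      by (simp only: z) algebra
    also have "\<dots> = 0" by (simp only: E133 E111 E112 E122) simp
    finally have Y: "g 2 3 3 = 0" using q by simp
    have "(4 * f 1 1 3 * f 2 2 3 - (f 1 2 3)^2) * g 1 3 3 = f 1 1 3 * (- 3 * f 1 2 2 * g 3 3 3 + 1 * f 1 2 3 * g 2 3 3 - 1 * f 1 3 3 * g 2 2 3 + 1 * f 2 2 3 * g 1 3 3 - 1 * f 2 3 3 * g 1 2 3 + 3 * f 3 3 3 * g 1 2 2) + f 1 2 3 * (3 * f 1 1 2 * g 3 3 3 - 1 * f 1 1 3 * g 2 3 3 - 1 * f 1 2 3 * g 1 3 3 + 1 * f 1 3 3 * g 1 2 3 + 1 * f 2 3 3 * g 1 1 3 - 3 * f 3 3 3 * g 1 1 2) + 3 * f 2 2 3 * (- 3 * f 1 1 1 * g 3 3 3 + 1 * f 1 1 3 * g 1 3 3 - 1 * f 1 3 3 * g 1 1 3 + 3 * f 3 3 3 * g 1 1 1) - 3 * f 3 3 3 * (- 3 * f 1 1 1 * g 2 2 3 + 1 * f 1 1 3 * g 1 2 2 + 1 * f 1 1 2 * g 1 2 3 - 1 * f 1 2 3 * g 1 1 2 - 1 * f 1 2 2 * g 1 1 3 + 3 * f 2 2 3 * g 1 1 1)"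
      by (simp only: z) algebra
    also have "\<dots> = 0" by (simp only: E233 E222 E112 E122) simp
    finally have X: "g 1 3 3 = 0" using q by simp
    show ?thesis using P1 d z X Y by blast
  qed
  show ?thesis using P1 P2 unfolding cz by blast
qed

end
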